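(* For every $B\in\mathbb{N}$ there exists an MSSP instance with two agents whose price of autonomy is at least $B$.
   Context: An MDP is a triple $M=(S,\textit{Act},P)$ with finite sets $S$, $\textit{Act}$ and $P:S\times\textit{Act}\times S\to[0,1]$ such that for each $s$ the set $\textit{En}(s)$ of enabled actions (those $a$ with $\sum_t P(s,a,t)=1$) is nonempty. An MSSP instance consists of an MDP $M$, a number $k\ge1$ of agents, and for each agent $i$ an initial state $\iota_i$ and target set $T_i\subseteq S$ with $\iota_i\notin T_i\neq\emptyset$. All agents move simultaneously and independently in $M$ under their chosen actions. $\textit{MHit}$ is the first time step at which some agent $i$ is in a state of $T_i$. A coordinated strategy is a (possibly randomized, history-dependent) strategy in the product MDP $(S^k,\textit{Act}^k,P')$, $P'((s_i)_i,(a_i)_i,(t_i)_i)=\prod_iP(s_i,a_i,t_i)$, started at $(\iota_1,\dots,\iota_k)$. An autonomous profile $(\sigma_1,\dots,\sigma_k)$ consists of strategies where $\sigma_i$ depends only on agent $i$'s own history (possibly randomized, with memory). The price of autonomy of an instance is the ratio $\inf_{\pi\text{ autonomous}}\mathbb{E}_\pi[\textit{MHit}]\,/\,\inf_{\sigma\text{ coordinated}}\mathbb{E}_\sigma[\textit{MHit}]$. *)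

theory Defs
  imports "HOL-Probability.Probability"
begin

text \<open>MDPs with states and actions drawn from nat (finite carrier sets).
  The transition function P is only consulted on S x Act x S.\<close>

record mdp =
  mdp_S   :: "nat set"
  mdp_Act :: "nat set"
  mdp_P   :: "nat \<Rightarrow> nat \<Rightarrow> nat \<Rightarrow> real"

definition En :: "mdp \<Rightarrow> nat \<Rightarrow> nat set" where
  "En M s = {a \<in> mdp_Act M. (\<Sum>t\<in>mdp_S M. mdp_P M s a t) = 1}"

definition is_mdp :: "mdp \<Rightarrow> bool" where
  "is_mdp M \<longleftrightarrow> finite (mdp_S M) \<and> finite (mdp_Act M) \<and>
     (\<forall>s\<in>mdp_S M. \<forall>a\<in>mdp_Act M. \<forall>t\<in>mdp_S M. 0 \<le> mdp_P M s a t \<and> mdp_P M s a t \<le> 1) \<and>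
     (\<forall>s\<in>mdp_S M. En M s \<noteq> {})"

definition trans_pmf :: "mdp \<Rightarrow> nat \<Rightarrow> nat \<Rightarrow> nat pmf" where
  "trans_pmf M s a = embed_pmf (\<lambda>t. if t \<in> mdp_S M then mdp_P M s a t else 0)"

definition mssp2 :: "mdp \<Rightarrow> nat \<Rightarrow> nat set \<Rightarrow> nat \<Rightarrow> nat set \<Rightarrow> bool" where
  "mssp2 M i1 T1 i2 T2 \<longleftrightarrow> is_mdp M \<and>
     i1 \<in> mdp_S M \<and> T1 \<subseteq> mdp_S M \<and> i1 \<notin> T1 \<and> T1 \<noteq> {} \<and>
     i2 \<in> mdp_S M \<and> T2 \<subseteq> mdp_S M \<and> i2 \<notin> T2 \<and> T2 \<noteq> {}"

text \<open>Coordinated strategies in the product MDP: a history is the list of past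
  (joint state, joint action) pairs together with the current joint state;
  the strategy returns a distribution over enabled joint actions.\<close>
type_synonym jhist = "((nat \<times> nat) \<times> (nat \<times> nat)) list"
type_synonym cstrat = "jhist \<Rightarrow> nat \<times> nat \<Rightarrow> (nat \<times> nat) pmf"

definition coord_strat :: "mdp \<Rightarrow> cstrat \<Rightarrow> bool" where
  "coord_strat M \<sigma> \<longleftrightarrow> (\<forall>h s1 s2. s1 \<in> mdp_S M \<longrightarrow> s2 \<in> mdp_S M \<longrightarrow>
       set_pmf (\<sigma> h (s1, s2)) \<subseteq> En M s1 \<times> En M s2)"

fun hist :: "mdp \<Rightarrow> nat \<Rightarrow> nat \<Rightarrow> cstrat \<Rightarrow> nat \<Rightarrow> (jhist \<times> (nat \<times> nat)) pmf" where
  "hist M i1 i2 \<sigma> 0 = return_pmf ([], (i1, i2))"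
| "hist M i1 i2 \<sigma> (Suc n) = hist M i1 i2 \<sigma> n \<bind> (\<lambda>(h, s).
      \<sigma> h s \<bind> (\<lambda>a. map_pmf (\<lambda>t. (h @ [(s, a)], t))
         (pair_pmf (trans_pmf M (fst s) (fst a)) (trans_pmf M (snd s) (snd a)))))"

definition not_hit :: "nat set \<Rightarrow> nat set \<Rightarrow> jhist \<times> (nat \<times> nat) \<Rightarrow> bool" where
  "not_hit T1 T2 x \<longleftrightarrow> (\<forall>s \<in> set (map fst (fst x) @ [snd x]). fst s \<notin> T1 \<and> snd s \<notin> T2)"

text \<open>E[MHit] = sum over n of Pr[MHit > n] (possibly infinite).\<close>
definition exp_MHit :: "mdp \<Rightarrow> nat \<Rightarrow> nat set \<Rightarrow> nat \<Rightarrow> nat set \<Rightarrow> cstrat \<Rightarrow> ennreal" where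
  "exp_MHit M i1 T1 i2 T2 \<sigma> =
     (\<Sum>n. ennreal (measure_pmf.prob (hist M i1 i2 \<sigma> n) {x. not_hit T1 T2 x}))"

text \<open>Autonomous strategies: each agent sees only its own (state, action) history
  and its current state.\<close>
type_synonym astrat = "(nat \<times> nat) list \<Rightarrow> nat \<Rightarrow> nat pmf"

definition auto_strat :: "mdp \<Rightarrow> astrat \<Rightarrow> bool" where
  "auto_strat M \<tau> \<longleftrightarrow> (\<forall>h s. s \<in> mdp_S M \<longrightarrow> set_pmf (\<tau> h s) \<subseteq> En M s)"

definition proj1_hist :: "jhist \<Rightarrow> (nat \<times> nat) list" where
  "proj1_hist h = map (\<lambda>(s, a). (fst s, fst a)) h"
definition proj2_hist :: "jhist \<Rightarrow> (nat \<times> nat) list" where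
  "proj2_hist h = map (\<lambda>(s, a). (snd s, snd a)) h"

definition profile :: "astrat \<Rightarrow> astrat \<Rightarrow> cstrat" where
  "profile \<tau>1 \<tau>2 = (\<lambda>h s. pair_pmf (\<tau>1 (proj1_hist h) (fst s)) (\<tau>2 (proj2_hist h) (snd s)))"

definition opt_coord :: "mdp \<Rightarrow> nat \<Rightarrow> nat set \<Rightarrow> nat \<Rightarrow> nat set \<Rightarrow> ennreal" where
  "opt_coord M i1 T1 i2 T2 = (INF \<sigma> \<in> {\<sigma>. coord_strat M \<sigma>}. exp_MHit M i1 T1 i2 T2 \<sigma>)"

definition opt_auto :: "mdp \<Rightarrow> nat \<Rightarrow> nat set \<Rightarrow> nat \<Rightarrow> nat set \<Rightarrow> ennreal" where
  "opt_auto M i1 T1 i2 T2 = (INF p \<in> {(\<tau>1, \<tau>2). auto_strat M \<tau>1 \<and> auto_strat M \<tau>2}.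
       exp_MHit M i1 T1 i2 T2 (profile (fst p) (snd p)))"

definition price_of_autonomy :: "mdp \<Rightarrow> nat \<Rightarrow> nat set \<Rightarrow> nat \<Rightarrow> nat set \<Rightarrow> ennreal" where
  "price_of_autonomy M i1 T1 i2 T2 = opt_auto M i1 T1 i2 T2 / opt_coord M i1 T1 i2 T2"

end

theory Submission
  imports Defs
begin

lemma pair_bind_bind:
  "pair_pmf (bind_pmf A f) (bind_pmf B g) = bind_pmf (pair_pmf A B) (\<lambda>(x,y). pair_pmf (f x) (g y))"
  unfolding pair_pmf_def
  apply (simp add: bind_assoc_pmf bind_return_pmf)
  apply (subst bind_commute_pmf[of B])
  apply (rule refl)
  done

fun hist1 :: "mdp \<Rightarrow> nat \<Rightarrow> astrat \<Rightarrow> nat \<Rightarrow> ((nat \<times> nat) list \<times> nat) pmf" where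
  "hist1 M i \<tau> 0 = return_pmf ([], i)"
| "hist1 M i \<tau> (Suc n) = hist1 M i \<tau> n \<bind> (\<lambda>(h, s).
      \<tau> h s \<bind> (\<lambda>a. map_pmf (\<lambda>t. (h @ [(s, a)], t)) (trans_pmf M s a)))"

definition combh :: "(nat \<times> nat) list \<Rightarrow> (nat \<times> nat) list \<Rightarrow> jhist" where
  "combh h1 h2 = map (\<lambda>((s1,a1),(s2,a2)). ((s1,s2),(a1,a2))) (zip h1 h2)"

definition comb :: "((nat \<times> nat) list \<times> nat) \<times> ((nat \<times> nat) list \<times> nat) \<Rightarrow> jhist \<times> (nat \<times> nat)" where
  "comb p = (combh (fst (fst p)) (fst (snd p)), (snd (fst p), snd (snd p)))"

lemma hist1_len: "x \<in> set_pmf (hist1 M i \<tau> n) \<Longrightarrow> length (fst x) = n"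
  by (induction n arbitrary: x) auto

lemma proj1_combh: "length h1 = length h2 \<Longrightarrow> proj1_hist (combh h1 h2) = h1"
  unfolding proj1_hist_def combh_def
  by (induction h1 h2 rule: list_induct2) auto

lemma proj2_combh: "length h1 = length h2 \<Longrightarrow> proj2_hist (combh h1 h2) = h2"
  unfolding proj2_hist_def combh_def
  by (induction h1 h2 rule: list_induct2) auto

lemma combh_snoc: "length h1 = length h2 \<Longrightarrow>
   combh (h1 @ [(s1,a1)]) (h2 @ [(s2,a2)]) = combh h1 h2 @ [((s1,s2),(a1,a2))]"
  unfolding combh_def by simp

lemma hist_profile:
  "hist M i1 i2 (profile \<tau>1 \<tau>2) n = map_pmf comb (pair_pmf (hist1 M i1 \<tau>1 n) (hist1 M i2 \<tau>2 n))"
proof (induction n)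
  case 0
  then show ?case by (simp add: comb_def combh_def)
next
  case (Suc n)
  have "hist M i1 i2 (profile \<tau>1 \<tau>2) (Suc n) =
     pair_pmf (hist1 M i1 \<tau>1 n) (hist1 M i2 \<tau>2 n) \<bind> (\<lambda>x. (case comb x of (h, s) \<Rightarrow>
      profile \<tau>1 \<tau>2 h s \<bind> (\<lambda>a. map_pmf (\<lambda>t. (h @ [(s, a)], t))
         (pair_pmf (trans_pmf M (fst s) (fst a)) (trans_pmf M (snd s) (snd a))))))"
    using Suc by (simp add: map_pmf_def bind_assoc_pmf bind_return_pmf)
  also have "\<dots> = pair_pmf (hist1 M i1 \<tau>1 n) (hist1 M i2 \<tau>2 n) \<bind> (\<lambda>(x,y). map_pmf comb (pair_pmf
      (case x of (h, s) \<Rightarrow> \<tau>1 h s \<bind> (\<lambda>a. map_pmf (\<lambda>t. (h @ [(s, a)], t)) (trans_pmf M s a)))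
      (case y of (h, s) \<Rightarrow> \<tau>2 h s \<bind> (\<lambda>a. map_pmf (\<lambda>t. (h @ [(s, a)], t)) (trans_pmf M s a)))))"
  proof (rule bind_pmf_cong[OF refl])
    fix z assume z: "z \<in> set_pmf (pair_pmf (hist1 M i1 \<tau>1 n) (hist1 M i2 \<tau>2 n))"
    obtain h1 s1 h2 s2 where zz: "z = ((h1,s1),(h2,s2))" by (metis prod.collapse)
    have len: "length h1 = length h2" using z zz hist1_len by fastforce
    show "(case comb z of (h, s) \<Rightarrow>
      profile \<tau>1 \<tau>2 h s \<bind> (\<lambda>a. map_pmf (\<lambda>t. (h @ [(s, a)], t))
         (pair_pmf (trans_pmf M (fst s) (fst a)) (trans_pmf M (snd s) (snd a))))) =
      (\<lambda>(x,y). map_pmf comb (pair_pmf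
      (case x of (h, s) \<Rightarrow> \<tau>1 h s \<bind> (\<lambda>a. map_pmf (\<lambda>t. (h @ [(s, a)], t)) (trans_pmf M s a)))
      (case y of (h, s) \<Rightarrow> \<tau>2 h s \<bind> (\<lambda>a. map_pmf (\<lambda>t. (h @ [(s, a)], t)) (trans_pmf M s a))))) z"
      unfolding zz using len
      apply (simp add: comb_def profile_def proj1_combh proj2_combh pair_bind_bind map_bind_pmf)
      apply (rule bind_pmf_cong[OF refl])
      apply (simp add: map_pair[symmetric] pmf.map_comp o_def split_beta combh_snoc comb_def)
      done
  qed
  also have "\<dots> = map_pmf comb (pair_pmf (hist1 M i1 \<tau>1 (Suc n)) (hist1 M i2 \<tau>2 (Suc n)))"
    by (simp add: pair_bind_bind map_bind_pmf case_prod_unfold)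
  finally show ?case .
qed


lemma embed_pmf_pmf: "embed_pmf (pmf p) = p"
  using type_definition.Rep_inverse[OF td_pmf_embed_pmf] by blast

definition Dd :: "nat \<Rightarrow> nat \<Rightarrow> nat \<Rightarrow> nat pmf" where
  "Dd N s a = (if s = 0 then map_pmf (\<lambda>b. if b then 2 else 4) (bernoulli_pmf (1 / real N))
     else if s = 1 then (if a = 0 then return_pmf 1 else if a = 1 then return_pmf 4
        else map_pmf (\<lambda>b. if b then 2 else 3) (bernoulli_pmf (1 / real N)))
     else if s = 2 \<or> s = 3 then return_pmf s
     else if s = N + 3 then return_pmf 3 else return_pmf (Suc s))"

definition okA :: "nat \<Rightarrow> nat \<Rightarrow> bool" where
  "okA s a \<longleftrightarrow> a = 0 \<or> (s = 1 \<and> (a = 1 \<or> a = 2))"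

definition MM :: "nat \<Rightarrow> mdp" where
  "MM N = \<lparr>mdp_S = {0..N+3}, mdp_Act = {0,1,2},
           mdp_P = (\<lambda>s a t. if okA s a then pmf (Dd N s a) t else 0)\<rparr>"

lemma set_Dd:
  assumes "N \<ge> 2" "s \<le> N + 3"
  shows "set_pmf (Dd N s a) \<subseteq> {0..N+3}"
proof -
  have "0 < 1 / real N" "1 / real N < 1" using assms by auto
  then show ?thesis using assms unfolding Dd_def by auto
qed

lemma En_MM:
  assumes "N \<ge> 2" "s \<le> N + 3"
  shows "En (MM N) s = {a. a \<le> 2 \<and> okA s a}"
proof -
  have "(\<Sum>t\<in>{0..N+3}. pmf (Dd N s a) t) = 1" for a
    by (rule sum_pmf_eq_1) (use set_Dd[OF assms] in auto)
  then have "(\<Sum>t\<in>mdp_S (MM N). mdp_P (MM N) s a t) = (if okA s a then 1 else 0)" for a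
    by (simp add: MM_def)
  then show ?thesis unfolding En_def by (auto simp: MM_def okA_def)
qed

lemma trans_MM:
  assumes "N \<ge> 2" "s \<le> N + 3" "okA s a"
  shows "trans_pmf (MM N) s a = Dd N s a"
proof -
  have "(\<lambda>t. if t \<in> mdp_S (MM N) then mdp_P (MM N) s a t else 0) = pmf (Dd N s a)"
    using set_Dd[OF assms(1,2), of a] assms(3) by (auto simp: fun_eq_iff set_pmf_eq MM_def)
  then show ?thesis unfolding trans_pmf_def by (simp add: embed_pmf_pmf)
qed

lemma is_mdp_MM: assumes "N \<ge> 2" shows "is_mdp (MM N)"
proof -
  have "\<forall>s\<in>{0..N+3}. En (MM N) s \<noteq> {}"
    using En_MM[OF assms] by (auto simp: okA_def)
  moreover have "pmf (Dd N s a) t \<le> 1" for s a t by (rule pmf_le_1)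
  ultimately show ?thesis unfolding is_mdp_def by (auto simp: MM_def)
qed


lemma hist1_supp_Suc:
  assumes "x' \<in> set_pmf (hist1 M i \<tau> (Suc n))"
  obtains x a t where "x \<in> set_pmf (hist1 M i \<tau> n)" "a \<in> set_pmf (\<tau> (fst x) (snd x))"
    "t \<in> set_pmf (trans_pmf M (snd x) a)" "x' = (fst x @ [(snd x, a)], t)"
  using assms by (auto simp: split_beta)

lemma hist_supp_Suc:
  assumes "x' \<in> set_pmf (hist M i1 i2 \<sigma> (Suc n))"
  obtains x a t1 t2 where "x \<in> set_pmf (hist M i1 i2 \<sigma> n)" "a \<in> set_pmf (\<sigma> (fst x) (snd x))"
    "t1 \<in> set_pmf (trans_pmf M (fst (snd x)) (fst a))"
    "t2 \<in> set_pmf (trans_pmf M (snd (snd x)) (snd a))"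
    "x' = (fst x @ [(snd x, a)], (t1, t2))"
  using assms by (auto simp: split_beta)

context
  fixes N :: nat
  assumes N2: "N \<ge> 2"
begin

lemma step_ok:
  assumes "s \<le> N + 3" "a \<in> En (MM N) s"
  shows "okA s a" "trans_pmf (MM N) s a = Dd N s a" "set_pmf (trans_pmf (MM N) s a) \<subseteq> {0..N+3}"
  using assms En_MM[OF N2 assms(1)] trans_MM[OF N2 assms(1)] set_Dd[OF N2 assms(1)] by auto

lemma hist1_S:
  assumes "auto_strat (MM N) \<tau>" "i \<le> N + 3" "x \<in> set_pmf (hist1 (MM N) i \<tau> n)"
  shows "snd x \<le> N + 3"
  using assms(3)
proof (induction n arbitrary: x)
  case 0 then show ?case using assms(2) by simp
next
  case (Suc n)
  from Suc.prems obtain y a t where y: "y \<in> set_pmf (hist1 (MM N) i \<tau> n)" "a \<in> set_pmf (\<tau> (fst y) (snd y))"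
    "t \<in> set_pmf (trans_pmf (MM N) (snd y) a)" "x = (fst y @ [(snd y, a)], t)"
    by (rule hist1_supp_Suc)
  have "snd y \<le> N + 3" using Suc.IH y(1) by blast
  moreover have "a \<in> En (MM N) (snd y)" using assms(1) y(2) calculation
    unfolding auto_strat_def MM_def by auto
  ultimately show ?case using step_ok y by fastforce
qed

lemma hist1_act:
  assumes "auto_strat (MM N) \<tau>" "i \<le> N + 3" "x \<in> set_pmf (hist1 (MM N) i \<tau> n)"
    "a \<in> set_pmf (\<tau> (fst x) (snd x))"
  shows "a \<le> 2" "okA (snd x) a" "trans_pmf (MM N) (snd x) a = Dd N (snd x) a"
proof -
  have s: "snd x \<le> N + 3" using hist1_S assms by blast
  have "set_pmf (\<tau> (fst x) (snd x)) \<subseteq> En (MM N) (snd x)"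
    using assms(1) s unfolding auto_strat_def by (simp add: MM_def)
  then have aE: "a \<in> En (MM N) (snd x)" using assms(4) by blast
  then show "a \<le> 2" "okA (snd x) a" using En_MM[OF N2 s] by simp_all
  show "trans_pmf (MM N) (snd x) a = Dd N (snd x) a" using step_ok(2)[OF s aE] .
qed

lemma hist1_absorb3:
  assumes "auto_strat (MM N) \<tau>" "i \<le> N + 3" "x \<in> set_pmf (hist1 (MM N) i \<tau> n)"
    "3 \<in> fst ` set (fst x)"
  shows "snd x = 3"
  using assms(3,4)
proof (induction n arbitrary: x)
  case 0 then show ?case by simp
next
  case (Suc n)
  from Suc.prems(1) obtain y a t where y: "y \<in> set_pmf (hist1 (MM N) i \<tau> n)" "a \<in> set_pmf (\<tau> (fst y) (snd y))"
    "t \<in> set_pmf (trans_pmf (MM N) (snd y) a)" "x = (fst y @ [(snd y, a)], t)"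
    by (rule hist1_supp_Suc)
  have "snd y = 3" using Suc y by (cases "3 \<in> fst ` set (fst y)") auto
  then show ?case using y hist1_act[OF assms(1,2) y(1,2)] by (auto simp: Dd_def okA_def)
qed

lemma hist1_mono2:
  assumes "auto_strat (MM N) \<tau>" "i \<le> N + 3"
  shows "emeasure (hist1 (MM N) i \<tau> n) {x. snd x = 2} \<le> emeasure (hist1 (MM N) i \<tau> (Suc n)) {x. snd x = 2}"
proof -
  define F where "F = (\<lambda>(h, s).
      bind_pmf (\<tau> h s) (\<lambda>a. map_pmf (\<lambda>t. (h @ [(s, a)], t)) (trans_pmf (MM N) s a)))"
  have hs: "hist1 (MM N) i \<tau> (Suc n) = bind_pmf (hist1 (MM N) i \<tau> n) F" by (simp add: F_def)
  have "emeasure (hist1 (MM N) i \<tau> n) {x. snd x = 2} = (\<integral>\<^sup>+x. indicator {x. snd x = 2} x \<partial>hist1 (MM N) i \<tau> n)"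
    by simp
  also have "\<dots> \<le> (\<integral>\<^sup>+x. emeasure (measure_pmf (F x)) {x. snd x = 2} \<partial>hist1 (MM N) i \<tau> n)"
  proof (rule nn_integral_mono_AE, unfold AE_measure_pmf_iff, intro ballI)
    fix x assume x: "x \<in> set_pmf (hist1 (MM N) i \<tau> n)"
    show "indicator {x. snd x = 2} x \<le> emeasure (measure_pmf (F x)) {x. snd x = 2}"
    proof (cases "snd x = 2")
      case True
      have "set_pmf (\<tau> (fst x) (snd x)) \<subseteq> {0}"
        using hist1_act[OF assms x] True by (auto simp: okA_def)
      then have t: "\<tau> (fst x) (snd x) = return_pmf 0"
        by (metis set_pmf_subset_singleton)
      have "trans_pmf (MM N) (snd x) 0 = return_pmf 2"
        using hist1_act[OF assms x, of 0] t True by (simp add: Dd_def)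
      then show ?thesis using True t by (simp add: split_beta F_def)
    qed simp
  qed
  also have "\<dots> = emeasure (hist1 (MM N) i \<tau> (Suc n)) {x. snd x = 2}"
    unfolding hs by simp
  finally show ?thesis .
qed

end


lemma nothit_comb:
  assumes "length h1 = length h2" "\<forall>s \<in> set (map fst h1 @ [s1]). s \<noteq> 3"
     "\<forall>s \<in> set (map fst h2 @ [s2]). s \<noteq> 3"
  shows "not_hit {3} {3} (comb ((h1,s1),(h2,s2)))"
  using assms unfolding not_hit_def comb_def combh_def
  by (force dest: set_zip_leftD set_zip_rightD)

context
  fixes N :: nat
  assumes N2: "N \<ge> 2"
begin

lemma pN: "0 < 1 / real N" "1 / real N < 1"
  using N2 by auto

lemma set_Dd_cases:
  assumes "t \<in> set_pmf (Dd N s a)"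
  shows "(s = 0 \<and> (t = 2 \<or> t = 4)) \<or> (s = 1 \<and> a = 0 \<and> t = 1) \<or> (s = 1 \<and> a = 1 \<and> t = 4)
    \<or> (s = 1 \<and> a \<noteq> 0 \<and> a \<noteq> 1 \<and> (t = 2 \<or> t = 3)) \<or> ((s = 2 \<or> s = 3) \<and> t = s)
    \<or> (4 \<le> s \<and> s = N + 3 \<and> t = 3) \<or> (4 \<le> s \<and> s \<noteq> N + 3 \<and> t = Suc s)"
  using assms pN unfolding Dd_def
  by (auto split: if_splits)

lemma gamble_2: "2 \<in> set_pmf (Dd N 1 2)"
  using pN unfolding Dd_def by auto

definition Inv :: "nat \<Rightarrow> nat \<Rightarrow> bool" where
  "Inv n s \<longleftrightarrow> s \<le> 2 \<or> (4 \<le> s \<and> s \<le> n + 3 \<and> s \<le> N + 3) \<or> (s = 3 \<and> N + 1 \<le> n)"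

lemma hist1_inv:
  assumes "auto_strat (MM N) \<tau>" "i \<le> 2"
    and nog: "\<And>m x. x \<in> set_pmf (hist1 (MM N) i \<tau> m) \<Longrightarrow> snd x = 1 \<Longrightarrow> 2 \<notin> set_pmf (\<tau> (fst x) (snd x))"
    and x: "x \<in> set_pmf (hist1 (MM N) i \<tau> n)"
  shows "Inv n (snd x)"
  using x
proof (induction n arbitrary: x)
  case 0 then show ?case using assms(2) by (simp add: Inv_def)
next
  case (Suc n)
  from Suc.prems obtain y a t where y: "y \<in> set_pmf (hist1 (MM N) i \<tau> n)" "a \<in> set_pmf (\<tau> (fst y) (snd y))"
    "t \<in> set_pmf (trans_pmf (MM N) (snd y) a)" "x = (fst y @ [(snd y, a)], t)"
    by (rule hist1_supp_Suc)
  have i3: "i \<le> N + 3" using assms(2) by simp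
  have I: "Inv n (snd y)" using Suc.IH y(1) by blast
  have a2: "a \<le> 2" and tr: "trans_pmf (MM N) (snd y) a = Dd N (snd y) a"
    using hist1_act[OF N2 assms(1) i3 y(1,2)] by auto
  have ng: "snd y = 1 \<Longrightarrow> a \<noteq> 2" using nog[OF y(1)] y(2) by blast
  have "t \<in> set_pmf (Dd N (snd y) a)" using y(3) tr by simp
  from set_Dd_cases[OF this] show ?case
    using I a2 ng y(4) N2 by (auto simp: Inv_def)
qed

lemma Inv_not3: "Inv n s \<Longrightarrow> n \<le> N \<Longrightarrow> s \<noteq> 3"
  by (auto simp: Inv_def)

lemma hist1_not1:
  assumes "auto_strat (MM N) \<tau>" "i = 0"
    and x: "x \<in> set_pmf (hist1 (MM N) i \<tau> n)"
  shows "snd x \<noteq> 1"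
  using x
proof (induction n arbitrary: x)
  case 0 then show ?case using assms(2) by simp
next
  case (Suc n)
  from Suc.prems obtain y a t where y: "y \<in> set_pmf (hist1 (MM N) i \<tau> n)" "a \<in> set_pmf (\<tau> (fst y) (snd y))"
    "t \<in> set_pmf (trans_pmf (MM N) (snd y) a)" "x = (fst y @ [(snd y, a)], t)"
    by (rule hist1_supp_Suc)
  have i3: "i \<le> N + 3" using assms(2) by simp
  have tr: "trans_pmf (MM N) (snd y) a = Dd N (snd y) a"
    using hist1_act[OF N2 assms(1) i3 y(1,2)] by auto
  have "t \<in> set_pmf (Dd N (snd y) a)" using y(3) tr by simp
  from set_Dd_cases[OF this] show ?case
    using Suc.IH[OF y(1)] y(4) by auto
qed

end


context
  fixes N :: nat
  assumes N2: "N \<ge> 2"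
begin

lemma hist1_supp_intro:
  assumes "x \<in> set_pmf (hist1 M i \<tau> m)" "a \<in> set_pmf (\<tau> (fst x) (snd x))"
    "t \<in> set_pmf (trans_pmf M (snd x) a)"
  shows "(fst x @ [(snd x, a)], t) \<in> set_pmf (hist1 M i \<tau> (Suc m))"
  using assms by (force simp: split_beta)

lemma hist1_hist_not3:
  assumes "auto_strat (MM N) \<tau>" "i \<le> N + 3" "x \<in> set_pmf (hist1 (MM N) i \<tau> n)" "snd x \<noteq> 3"
  shows "\<forall>s \<in> set (map fst (fst x) @ [snd x]). s \<noteq> 3"
  using hist1_absorb3[OF N2 assms(1,2,3)] assms(4) by force

lemma hist1_mono2_real:
  assumes "auto_strat (MM N) \<tau>" "i \<le> N + 3" "m \<le> n"
  shows "measure (hist1 (MM N) i \<tau> m) {x. snd x = 2} \<le> measure (hist1 (MM N) i \<tau> n) {x. snd x = 2}"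
proof (rule lift_Suc_mono_le[OF _ assms(3), where f = "\<lambda>n. measure (hist1 (MM N) i \<tau> n) {x. snd x = 2}"])
  fix k
  show "measure (hist1 (MM N) i \<tau> k) {x. snd x = 2} \<le> measure (hist1 (MM N) i \<tau> (Suc k)) {x. snd x = 2}"
    using hist1_mono2[OF N2 assms(1,2), of k]
    by (simp add: measure_pmf.emeasure_eq_measure)
qed

lemma hist1_agent1_at1:
  assumes "auto_strat (MM N) \<tau>"
  shows "measure (hist1 (MM N) 0 \<tau> 1) {x. snd x = 2} = 1 / real N"
proof -
  have x0: "([], 0) \<in> set_pmf (hist1 (MM N) 0 \<tau> 0)" by simp
  have "set_pmf (\<tau> [] 0) \<subseteq> {0}"
    using hist1_act[OF N2 assms _ x0] by (auto simp: okA_def)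
  then have t: "\<tau> [] 0 = return_pmf 0" by (metis set_pmf_subset_singleton)
  have tr: "trans_pmf (MM N) 0 0 = Dd N 0 0" using trans_MM[OF N2] by (simp add: okA_def)
  have "hist1 (MM N) 0 \<tau> 1 = map_pmf (\<lambda>t. ([(0, 0)], t)) (Dd N 0 0)"
    by (simp add: t tr bind_return_pmf)
  moreover have bt: "{x::bool. x} = {True}" by auto
  ultimately have "measure (hist1 (MM N) 0 \<tau> 1) {x. snd x = 2} = measure (bernoulli_pmf (1 / real N)) {True}"
    using bt by (simp add: Dd_def vimage_def)
  also have "\<dots> = 1 / real N" using pN[OF N2] by (simp add: measure_pmf_single)
  finally show ?thesis .
qed

lemma auto_lower:
  assumes t1: "auto_strat (MM N) \<tau>1" and t2: "auto_strat (MM N) \<tau>2"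
  shows "ennreal (real N + 1) \<le> exp_MHit (MM N) 0 {3} 1 {3} (profile \<tau>1 \<tau>2)"
proof -
  define H1 where "H1 = hist1 (MM N) 0 \<tau>1"
  define H2 where "H2 = hist1 (MM N) 1 \<tau>2"
  define P where "P n = measure_pmf.prob (hist (MM N) 0 1 (profile \<tau>1 \<tau>2) n) {x. not_hit {3} {3} x}" for n
  have Pdef: "P n = measure (pair_pmf (H1 n) (H2 n)) (comb -` {x. not_hit {3} {3} x})" for n
    unfolding P_def hist_profile H1_def H2_def by simp
  have E: "exp_MHit (MM N) 0 {3} 1 {3} (profile \<tau>1 \<tau>2) = (\<Sum>n. ennreal (P n))"
    unfolding exp_MHit_def P_def ..
  have Pnn: "0 \<le> P n" for n unfolding P_def by simp
  have i03: "(0::nat) \<le> N + 3" "(1::nat) \<le> N + 3" by auto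
  show ?thesis
  proof (cases "\<exists>m0. measure (H2 m0) {x. snd x = 2} > 0")
    case True
    then obtain m0 where m0: "measure (H2 m0) {x. snd x = 2} > 0" by blast
    define c where "c = measure (H2 m0) {x. snd x = 2} / real N"
    have c0: "c > 0" using m0 N2 by (simp add: c_def)
    have lowP: "c \<le> P n" if n: "n \<ge> Suc m0" for n
    proof -
      have a1: "1 / real N \<le> measure (H1 n) {x. snd x = 2}"
        using hist1_agent1_at1[OF t1] hist1_mono2_real[OF t1 i03(1), of 1 n] n
        unfolding H1_def by simp
      have a2: "measure (H2 m0) {x. snd x = 2} \<le> measure (H2 n) {x. snd x = 2}"
        using hist1_mono2_real[OF t2 i03(2), of m0 n] n unfolding H2_def by simp
      have "c \<le> measure (H1 n) {x. snd x = 2} * measure (H2 n) {x. snd x = 2}"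
        unfolding c_def using a1 a2 m0 N2
        by (simp add: divide_inverse mult.commute mult_mono)
      also have "\<dots> = measure (pair_pmf (H1 n) (H2 n)) ({x. snd x = 2} \<times> {x. snd x = 2})"
        by (simp add: measure_pmf_prob_product)
      also have "\<dots> \<le> P n"
        unfolding Pdef
      proof (rule measure_pmf.finite_measure_mono_AE)
        show "AE z in measure_pmf (pair_pmf (H1 n) (H2 n)).
            z \<in> {x. snd x = 2} \<times> {x. snd x = 2} \<longrightarrow> z \<in> comb -` {x. not_hit {3} {3} x}"
        proof (unfold AE_measure_pmf_iff, intro ballI impI)
          fix z assume z: "z \<in> set_pmf (pair_pmf (H1 n) (H2 n))"
            and zz: "z \<in> {x. snd x = 2} \<times> {x. snd x = 2}"
          obtain h1 s1 h2 s2 where zd: "z = ((h1,s1),(h2,s2))" by (metis prod.collapse)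
          have x1: "(h1,s1) \<in> set_pmf (H1 n)" and x2: "(h2,s2) \<in> set_pmf (H2 n)" using z zd by auto
          have len: "length h1 = length h2"
            using hist1_len[of "(h1,s1)"] hist1_len[of "(h2,s2)"] x1 x2 unfolding H1_def H2_def by auto
          have n1: "\<forall>s \<in> set (map fst h1 @ [s1]). s \<noteq> 3"
            using hist1_hist_not3[OF t1 i03(1) x1[unfolded H1_def]] zz zd by simp
          have n2: "\<forall>s \<in> set (map fst h2 @ [s2]). s \<noteq> 3"
            using hist1_hist_not3[OF t2 i03(2) x2[unfolded H2_def]] zz zd by simp
          show "z \<in> comb -` {x. not_hit {3} {3} x}"
            unfolding zd using nothit_comb[OF len n1 n2] by simp
        qed
      qed simp
      finally show ?thesis .
    qed
    have "exp_MHit (MM N) 0 {3} 1 {3} (profile \<tau>1 \<tau>2) = \<top>"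
    proof (rule ccontr)
      assume "exp_MHit (MM N) 0 {3} 1 {3} (profile \<tau>1 \<tau>2) \<noteq> \<top>"
      then have "(\<Sum>n. ennreal (P n)) \<noteq> \<top>" unfolding E .
      then have "summable P" by (intro summable_suminf_not_top Pnn)
      then have "P \<longlonglongrightarrow> 0" by (rule summable_LIMSEQ_zero)
      then have "eventually (\<lambda>n. P n < c) sequentially"
        using c0 by (simp add: order_tendstoD(2))
      then obtain n1 where "\<forall>n\<ge>n1. P n < c" by (auto simp: eventually_sequentially)
      then have "P (max n1 (Suc m0)) < c" by (meson max.cobounded1)
      with lowP[of "max n1 (Suc m0)"] show False by simp
    qed
    then show ?thesis by simp
  next
    case False
    then have z2: "measure (H2 m) {x. snd x = 2} = 0" for m
    proof -
      have "\<not> measure (H2 m) {x. snd x = 2} > 0" using False by blast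
      then show ?thesis using measure_nonneg[of "measure_pmf (H2 m)" "{x. snd x = 2}"] by linarith
    qed
    have nog2: "2 \<notin> set_pmf (\<tau>2 (fst x) (snd x))"
      if x: "x \<in> set_pmf (hist1 (MM N) 1 \<tau>2 m)" and s: "snd x = 1" for m x
    proof
      assume a: "2 \<in> set_pmf (\<tau>2 (fst x) (snd x))"
      have "trans_pmf (MM N) 1 2 = Dd N 1 2" using trans_MM[OF N2] by (simp add: okA_def)
      then have "2 \<in> set_pmf (trans_pmf (MM N) (snd x) 2)" using gamble_2[OF N2] s by simp
      from hist1_supp_intro[OF x a this] have "measure (H2 (Suc m)) {x. snd x = 2} > 0"
        unfolding H2_def by (intro measure_pmf_posI) auto
      with z2 show False by simp
    qed
    have nog1: "2 \<notin> set_pmf (\<tau>1 (fst x) (snd x))"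
      if x: "x \<in> set_pmf (hist1 (MM N) 0 \<tau>1 m)" and s: "snd x = 1" for m x
      using hist1_not1[OF N2 t1 refl x] s by simp
    have P1: "P n = 1" if n: "n \<le> N" for n
    proof -
      have "measure (pair_pmf (H1 n) (H2 n)) (comb -` {x. not_hit {3} {3} x}) = 1"
      proof (subst measure_pmf.prob_eq_1, simp, unfold AE_measure_pmf_iff, intro ballI)
        fix z assume z: "z \<in> set_pmf (pair_pmf (H1 n) (H2 n))"
        obtain h1 s1 h2 s2 where zd: "z = ((h1,s1),(h2,s2))" by (metis prod.collapse)
        have x1: "(h1,s1) \<in> set_pmf (H1 n)" and x2: "(h2,s2) \<in> set_pmf (H2 n)" using z zd by auto
        have len: "length h1 = length h2"
          using hist1_len[of "(h1,s1)"] hist1_len[of "(h2,s2)"] x1 x2 unfolding H1_def H2_def by auto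
        have "Inv N n s1" using hist1_inv[OF N2 t1 _ nog1 x1[unfolded H1_def]] by simp
        then have s1: "s1 \<noteq> 3" using Inv_not3[OF N2] n by blast
        have "Inv N n s2" using hist1_inv[OF N2 t2 _ nog2 x2[unfolded H2_def]] by simp
        then have s2: "s2 \<noteq> 3" using Inv_not3[OF N2] n by blast
        have n1: "\<forall>s \<in> set (map fst h1 @ [s1]). s \<noteq> 3"
          using hist1_hist_not3[OF t1 i03(1) x1[unfolded H1_def]] s1 by simp
        have n2: "\<forall>s \<in> set (map fst h2 @ [s2]). s \<noteq> 3"
          using hist1_hist_not3[OF t2 i03(2) x2[unfolded H2_def]] s2 by simp
        show "z \<in> comb -` {x. not_hit {3} {3} x}"
          unfolding zd using nothit_comb[OF len n1 n2] by simp
      qed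
      then show ?thesis unfolding Pdef .
    qed
    have "ennreal (real N + 1) = (\<Sum>n<Suc N. ennreal (P n))"
      using P1 by (simp add: ennreal_of_nat_eq_real_of_nat)
    also have "\<dots> \<le> (\<Sum>n. ennreal (P n))"
      by (rule sum_le_suminf) auto
    finally show ?thesis using E by simp
  qed
qed

end


definition a2c :: "nat \<times> nat \<Rightarrow> nat" where
  "a2c s = (if snd s = 1 then (if fst s = 0 then 0 else if fst s = 2 then 1 else 2) else 0)"

definition sigc :: cstrat where
  "sigc h s = return_pmf (0, a2c s)"

context
  fixes N :: nat
  assumes N2: "N \<ge> 2"
begin

definition J :: "nat \<Rightarrow> nat \<times> nat \<Rightarrow> bool" where
  "J n s \<longleftrightarrow> (n = 0 \<and> s = (0,1)) \<or> (n = 1 \<and> (s = (2,1) \<or> s = (4,1)))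
     \<or> (n \<ge> 2 \<and> ((fst s = 2 \<and> snd s = (if n \<le> N + 1 then n + 2 else 3))
          \<or> (fst s = (if n \<le> N then n + 3 else 3) \<and> (snd s = 3 \<or> snd s = 2))))"

lemma J_S: "J n s \<Longrightarrow> fst s \<le> N + 3 \<and> snd s \<le> N + 3"
  using N2 unfolding J_def by auto

lemma coord_sigc: "coord_strat (MM N) sigc"
  unfolding coord_strat_def sigc_def
proof (intro allI impI)
  fix h s1 s2 assume s: "s1 \<in> mdp_S (MM N)" "s2 \<in> mdp_S (MM N)"
  then have "s1 \<le> N + 3" "s2 \<le> N + 3" by (auto simp: MM_def)
  then show "set_pmf (return_pmf (0, a2c (s1, s2))) \<subseteq> En (MM N) s1 \<times> En (MM N) s2"
    using En_MM[OF N2] by (auto simp: a2c_def okA_def)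
qed

lemma hist_J:
  assumes "x \<in> set_pmf (hist (MM N) 0 1 sigc n)"
  shows "J n (snd x)"
  using assms
proof (induction n arbitrary: x)
  case 0 then show ?case by (simp add: J_def)
next
  case (Suc n)
  from Suc.prems obtain y a t1 t2 where y: "y \<in> set_pmf (hist (MM N) 0 1 sigc n)"
    "a \<in> set_pmf (sigc (fst y) (snd y))"
    "t1 \<in> set_pmf (trans_pmf (MM N) (fst (snd y)) (fst a))"
    "t2 \<in> set_pmf (trans_pmf (MM N) (snd (snd y)) (snd a))"
    "x = (fst y @ [(snd y, a)], (t1, t2))"
    by (rule hist_supp_Suc)
  have J: "J n (snd y)" using Suc.IH y(1) by blast
  have S: "fst (snd y) \<le> N + 3" "snd (snd y) \<le> N + 3" using J_S[OF J] by auto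
  have a: "a = (0, a2c (snd y))" using y(2) by (simp add: sigc_def)
  have ok1: "okA (fst (snd y)) 0" by (simp add: okA_def)
  have ok2: "okA (snd (snd y)) (a2c (snd y))" by (auto simp: okA_def a2c_def)
  have t1: "t1 \<in> set_pmf (Dd N (fst (snd y)) 0)"
    using y(3) trans_MM[OF N2 S(1) ok1] a by simp
  have t2: "t2 \<in> set_pmf (Dd N (snd (snd y)) (a2c (snd y)))"
    using y(4) trans_MM[OF N2 S(2) ok2] a by simp
  obtain s1 s2 where sy: "snd y = (s1, s2)" by (metis prod.collapse)
  show ?case
    using set_Dd_cases[OF N2 t1] set_Dd_cases[OF N2 t2] J N2 y(5) sy
    unfolding J_def a2c_def
    by (auto split: if_splits)
qed

end


context
  fixes N :: nat
  assumes N2: "N \<ge> 2"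
begin

definition Phi :: "nat \<Rightarrow> ennreal" where
  "Phi s = (if s = 2 then 1 else if s \<le> 1 then ennreal (1 / real N) else 0)"

lemma nn_bern: "(\<integral>\<^sup>+b. f b \<partial>measure_pmf (bernoulli_pmf (1 / real N))) =
    f True * ennreal (1 / real N) + f False * ennreal (1 - 1 / real N)"
  using pN[OF N2]
  by (subst nn_integral_measure_pmf_finite) (auto simp: UNIV_bool)

lemma Phi_step:
  assumes "okA s a"
  shows "(\<integral>\<^sup>+t. Phi t \<partial>measure_pmf (Dd N s a)) \<le> Phi s"
proof -
  consider "s = 0" | "s = 1" "a = 0" | "s = 1" "a = 1" | "s = 1" "a = 2" | "s = 2" | "s = 3" | "s \<ge> 4"
    using assms unfolding okA_def by linarith
  then show ?thesis
  proof cases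
    case 1 then show ?thesis by (simp add: Dd_def nn_bern Phi_def)
  next
    case 4 then show ?thesis by (simp add: Dd_def nn_bern Phi_def)
  qed (auto simp: Dd_def Phi_def)
qed

lemma Phi_fst:
  "(\<integral>\<^sup>+x. Phi (fst (snd x)) \<partial>measure_pmf (hist (MM N) 0 1 sigc n)) \<le> ennreal (1 / real N)"
proof (induction n)
  case 0 then show ?case by (simp add: Phi_def)
next
  case (Suc n)
  have "(\<integral>\<^sup>+x. Phi (fst (snd x)) \<partial>measure_pmf (hist (MM N) 0 1 sigc (Suc n)))
     = (\<integral>\<^sup>+x. (\<integral>\<^sup>+t. Phi t \<partial>measure_pmf (trans_pmf (MM N) (fst (snd x)) 0)) \<partial>measure_pmf (hist (MM N) 0 1 sigc n))"
    by (simp add: sigc_def split_beta nn_integral_pair_pmf')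
  also have "\<dots> \<le> (\<integral>\<^sup>+x. Phi (fst (snd x)) \<partial>measure_pmf (hist (MM N) 0 1 sigc n))"
  proof (rule nn_integral_mono_AE, unfold AE_measure_pmf_iff, intro ballI)
    fix x assume x: "x \<in> set_pmf (hist (MM N) 0 1 sigc n)"
    have S: "fst (snd x) \<le> N + 3" using J_S[OF N2 hist_J[OF N2 x]] by simp
    have ok: "okA (fst (snd x)) 0" by (simp add: okA_def)
    show "(\<integral>\<^sup>+t. Phi t \<partial>measure_pmf (trans_pmf (MM N) (fst (snd x)) 0)) \<le> Phi (fst (snd x))"
      using Phi_step[OF ok] trans_MM[OF N2 S ok] by simp
  qed
  finally show ?case using Suc by simp
qed

lemma Phi_snd:
  "(\<integral>\<^sup>+x. Phi (snd (snd x)) \<partial>measure_pmf (hist (MM N) 0 1 sigc n)) \<le> ennreal (1 / real N)"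
proof (induction n)
  case 0 then show ?case by (simp add: Phi_def)
next
  case (Suc n)
  have "(\<integral>\<^sup>+x. Phi (snd (snd x)) \<partial>measure_pmf (hist (MM N) 0 1 sigc (Suc n)))
     = (\<integral>\<^sup>+x. (\<integral>\<^sup>+t. Phi t \<partial>measure_pmf (trans_pmf (MM N) (snd (snd x)) (a2c (snd x)))) \<partial>measure_pmf (hist (MM N) 0 1 sigc n))"
    by (simp add: sigc_def split_beta nn_integral_pair_pmf')
  also have "\<dots> \<le> (\<integral>\<^sup>+x. Phi (snd (snd x)) \<partial>measure_pmf (hist (MM N) 0 1 sigc n))"
  proof (rule nn_integral_mono_AE, unfold AE_measure_pmf_iff, intro ballI)
    fix x assume x: "x \<in> set_pmf (hist (MM N) 0 1 sigc n)"
    have S: "snd (snd x) \<le> N + 3" using J_S[OF N2 hist_J[OF N2 x]] by simp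
    have ok: "okA (snd (snd x)) (a2c (snd x))" by (auto simp: okA_def a2c_def)
    show "(\<integral>\<^sup>+t. Phi t \<partial>measure_pmf (trans_pmf (MM N) (snd (snd x)) (a2c (snd x)))) \<le> Phi (snd (snd x))"
      using Phi_step[OF ok] trans_MM[OF N2 S ok] by simp
  qed
  finally show ?case using Suc by simp
qed

end


context
  fixes N :: nat
  assumes N2: "N \<ge> 2"
begin

lemma prob_le_Phi1:
  "measure (hist (MM N) 0 1 sigc n) {x. fst (snd x) = 2} \<le> 1 / real N"
proof -
  have "ennreal (measure (hist (MM N) 0 1 sigc n) {x. fst (snd x) = 2})
      = (\<integral>\<^sup>+x. indicator {x. fst (snd x) = 2} x \<partial>measure_pmf (hist (MM N) 0 1 sigc n))"
    by (simp add: measure_pmf.emeasure_eq_measure)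
  also have "\<dots> \<le> (\<integral>\<^sup>+x. Phi N (fst (snd x)) \<partial>measure_pmf (hist (MM N) 0 1 sigc n))"
    by (rule nn_integral_mono) (auto simp: Phi_def[OF N2] split: split_indicator)
  also have "\<dots> \<le> ennreal (1 / real N)" by (rule Phi_fst[OF N2])
  finally show ?thesis by (simp add: ennreal_le_iff[symmetric] del: ennreal_le_iff)
qed

lemma prob_le_Phi2:
  "measure (hist (MM N) 0 1 sigc n) {x. snd (snd x) = 2} \<le> 1 / real N"
proof -
  have "ennreal (measure (hist (MM N) 0 1 sigc n) {x. snd (snd x) = 2})
      = (\<integral>\<^sup>+x. indicator {x. snd (snd x) = 2} x \<partial>measure_pmf (hist (MM N) 0 1 sigc n))"
    by (simp add: measure_pmf.emeasure_eq_measure)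
  also have "\<dots> \<le> (\<integral>\<^sup>+x. Phi N (snd (snd x)) \<partial>measure_pmf (hist (MM N) 0 1 sigc n))"
    by (rule nn_integral_mono) (auto simp: Phi_def[OF N2] split: split_indicator)
  also have "\<dots> \<le> ennreal (1 / real N)" by (rule Phi_snd[OF N2])
  finally show ?thesis by (simp add: ennreal_le_iff[symmetric] del: ennreal_le_iff)
qed

lemma nh_cur: "not_hit {3} {3} x \<Longrightarrow> fst (snd x) \<noteq> 3 \<and> snd (snd x) \<noteq> 3"
  unfolding not_hit_def by auto

lemma P_bound:
  defines "g \<equiv> (\<lambda>n::nat. if n < 2 then 1 else if n < N + 2 then 2 / real N else 0)"
  shows "measure (hist (MM N) 0 1 sigc n) {x. not_hit {3} {3} x} \<le> g n"
proof -
  consider "n < 2" | "2 \<le> n" "n < N + 2" | "N + 2 \<le> n" by linarith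
  then show ?thesis
  proof cases
    case 1 then show ?thesis by (simp add: g_def)
  next
    case 2
    let ?p = "hist (MM N) 0 1 sigc n"
    have "measure ?p {x. not_hit {3} {3} x} \<le> measure ?p ({x. fst (snd x) = 2} \<union> {x. snd (snd x) = 2})"
    proof (rule measure_pmf.finite_measure_mono_AE)
      show "AE x in measure_pmf ?p. x \<in> {x. not_hit {3} {3} x} \<longrightarrow> x \<in> {x. fst (snd x) = 2} \<union> {x. snd (snd x) = 2}"
      proof (unfold AE_measure_pmf_iff, intro ballI impI)
        fix x assume x: "x \<in> set_pmf ?p" and nh: "x \<in> {x. not_hit {3} {3} x}"
        obtain s1 s2 where sx: "snd x = (s1, s2)" by (metis prod.collapse)
        have "J N n (s1, s2)" using hist_J[OF N2 x] sx by simp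
        moreover have "s1 \<noteq> 3" "s2 \<noteq> 3" using nh_cur[of x] nh sx by auto
        ultimately have "s1 = 2 \<or> s2 = 2" using 2 unfolding J_def[OF N2] by (auto split: if_splits)
        then show "x \<in> {x. fst (snd x) = 2} \<union> {x. snd (snd x) = 2}" using sx by auto
      qed
    qed simp
    also have "\<dots> \<le> measure ?p {x. fst (snd x) = 2} + measure ?p {x. snd (snd x) = 2}"
      by (rule measure_Un_le) auto
    also have "\<dots> \<le> 2 / real N" using prob_le_Phi1[of n] prob_le_Phi2[of n] by simp
    finally show ?thesis using 2 by (simp add: g_def)
  next
    case 3
    let ?p = "hist (MM N) 0 1 sigc n"
    have "measure ?p {x. not_hit {3} {3} x} = 0"
    proof -
      have "\<not> not_hit {3} {3} x" if x: "x \<in> set_pmf ?p" for x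
      proof
        assume nh: "not_hit {3} {3} x"
        obtain s1 s2 where sx: "snd x = (s1, s2)" by (metis prod.collapse)
        have "J N n (s1, s2)" using hist_J[OF N2 x] sx by simp
        moreover have "s1 \<noteq> 3" "s2 \<noteq> 3" using nh_cur[of x] nh sx by auto
        ultimately show False using 3 unfolding J_def[OF N2] by (auto split: if_splits)
      qed
      then show ?thesis by (subst measure_pmf_zero_iff) blast
    qed
    then show ?thesis using 3 by (simp add: g_def)
  qed
qed

lemma coord_upper: "exp_MHit (MM N) 0 {3} 1 {3} sigc \<le> 4"
proof -
  define g where "g = (\<lambda>n::nat. if n < 2 then 1 else if n < N + 2 then 2 / real N else 0)"
  have g0: "0 \<le> g n" for n by (simp add: g_def)
  have "exp_MHit (MM N) 0 {3} 1 {3} sigc \<le> (\<Sum>n. ennreal (g n))"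
    unfolding exp_MHit_def
    by (intro suminf_le summableI) (use P_bound in \<open>auto simp: g_def\<close>)
  also have "(\<Sum>n. ennreal (g n)) = (\<Sum>n<N+2. ennreal (g n))"
    by (rule suminf_finite) (auto simp: g_def)
  also have "\<dots> = ennreal (\<Sum>n<N+2. g n)" by (rule sum_ennreal) (simp add: g0)
  also have "(\<Sum>n<N+2. g n) = 4"
  proof -
    have u: "{..<N+2} = {..<2} \<union> {2..<N+2}" by auto
    have "(\<Sum>n<N+2. g n) = (\<Sum>n<2. g n) + (\<Sum>n\<in>{2..<N+2}. g n)"
      unfolding u by (rule sum.union_disjoint) auto
    also have "(\<Sum>n<2. g n) = 2" by (simp add: g_def numeral_2_eq_2)
    also have "(\<Sum>n\<in>{2..<N+2}. g n) = (\<Sum>n\<in>{2..<N+2}. 2 / real N)"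
      by (rule sum.cong) (auto simp: g_def)
    also have "\<dots> = 2" using N2 by simp
    finally show ?thesis by simp
  qed
  finally show ?thesis by simp
qed

end

theorem mainTheorem7:
  fixes B :: nat
  shows "\<exists>M i1 T1 i2 T2. mssp2 M i1 T1 i2 T2 \<and>
           opt_coord M i1 T1 i2 T2 < \<top> \<and>
           of_nat B \<le> price_of_autonomy M i1 T1 i2 T2"
proof -
  define N where "N = 4 * B + 4"
  have N2: "N \<ge> 2" by (simp add: N_def)
  have ms: "mssp2 (MM N) 0 {3} 1 {3}"
    using is_mdp_MM[OF N2] by (simp add: mssp2_def MM_def)
  have oc: "opt_coord (MM N) 0 {3} 1 {3} \<le> 4"
  proof -
    have "opt_coord (MM N) 0 {3} 1 {3} \<le> exp_MHit (MM N) 0 {3} 1 {3} sigc"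
      unfolding opt_coord_def by (rule INF_lower) (simp add: coord_sigc[OF N2])
    then show ?thesis using coord_upper[OF N2] by (rule order_trans)
  qed
  have oa: "ennreal (real N + 1) \<le> opt_auto (MM N) 0 {3} 1 {3}"
    unfolding opt_auto_def
  proof (rule INF_greatest)
    fix p assume "p \<in> {(\<tau>1, \<tau>2). auto_strat (MM N) \<tau>1 \<and> auto_strat (MM N) \<tau>2}"
    then have "auto_strat (MM N) (fst p)" "auto_strat (MM N) (snd p)" by auto
    then show "ennreal (real N + 1) \<le> exp_MHit (MM N) 0 {3} 1 {3} (profile (fst p) (snd p))"
      by (rule auto_lower[OF N2])
  qed
  have lt: "opt_coord (MM N) 0 {3} 1 {3} < \<top>"
    using oc by (simp add: order_le_less_trans top.not_eq_extremum)
  have "of_nat B \<le> ennreal (real N + 1) / opt_coord (MM N) 0 {3} 1 {3}"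
  proof (cases "opt_coord (MM N) 0 {3} 1 {3} = 0")
    case True then show ?thesis by (simp add: divide_ennreal_def ennreal_mult_top)
  next
    case False
    obtain r where r: "opt_coord (MM N) 0 {3} 1 {3} = ennreal r" "0 \<le> r"
      using lt by (cases "opt_coord (MM N) 0 {3} 1 {3}") auto
    have r0: "r > 0" using False r by (auto simp: order_le_less)
    have r4: "r \<le> 4" using oc r by (metis ennreal_le_iff ennreal_numeral zero_le_numeral)
    have "real B \<le> (real N + 1) / r"
    proof -
      have "real B * r \<le> real B * 4" using r4 by (simp add: mult_left_mono)
      also have "\<dots> \<le> real N + 1" by (simp add: N_def)
      finally show ?thesis using r0 by (simp add: pos_le_divide_eq)
    qed
    then have "ennreal (real B) \<le> ennreal ((real N + 1) / r)" by (rule ennreal_leI)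
    also have "ennreal ((real N + 1) / r) = ennreal (real N + 1) / ennreal r"
      using r0 by (intro divide_ennreal[symmetric]) auto
    finally show ?thesis unfolding r(1) by (simp only: ennreal_of_nat_eq_real_of_nat)
  qed
  also have "\<dots> \<le> price_of_autonomy (MM N) 0 {3} 1 {3}"
    unfolding price_of_autonomy_def by (rule divide_right_mono_ennreal[OF oa])
  finally show ?thesis using ms lt by blast
qed

end
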